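(* Let $0<\mu\leq L$ and $c\geq 0$, and let $I=\left(0, \tfrac{2\mu}{\mu L+c^2}\right)$. Define $u:I\to\mathbb{R}$ by $$ u(t)=\tfrac{1}{2}\left(L^2+\mu^2+2c^2\right)t^2-(L+\mu)t +\tfrac{1}{2}(L-\mu)t\sqrt{(Lt + \mu t - 2)^2 + 4c^2t^2}. $$ Then $u$ is convex on $I$ and $u(I)\subseteq [-1, 0)$. *)

theory Defs
  imports "HOL-Analysis.Analysis"
begin

end

theory Submission
  imports Defs
begin

lemma cs_bound:
  fixes d e a b :: real
  assumes "a^2 + b^2 = 1"
  shows "d*a + e*b \<le> sqrt (d^2 + e^2)"
proof -
  have id: "(d*a + e*b)^2 + (d*b - e*a)^2 = (d^2+e^2)*(a^2+b^2)"
    by (simp add: power2_eq_square algebra_simps)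
  have "(d*a + e*b)^2 \<le> d^2 + e^2"
  proof -
    have "(d*a + e*b)^2 + (d*b - e*a)^2 = d^2+e^2" using id assms by simp
    moreover have "(d*b - e*a)^2 \<ge> 0" by simp
    ultimately show ?thesis by linarith
  qed
  then show ?thesis by (rule real_le_rsqrt)
qed

lemma quad_convex:
  fixes A B x y t :: real
  assumes "A \<ge> 0" "0 \<le> t" "t \<le> 1"
  shows "A*((1-t)*x+t*y)^2 + B*((1-t)*x+t*y) \<le> (1-t)*(A*x^2+B*x) + t*(A*y^2+B*y)"
proof -
  have "(1-t)*(A*x^2+B*x) + t*(A*y^2+B*y) - (A*((1-t)*x+t*y)^2 + B*((1-t)*x+t*y))
        = A*(t*(1-t))*(x-y)^2"
    by (simp add: power2_eq_square algebra_simps)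
  moreover have "A*(t*(1-t))*(x-y)^2 \<ge> 0"
    using assms by simp
  ultimately show ?thesis by linarith
qed

theorem lemma2p1:
  fixes \<mu> L c :: real and u :: "real \<Rightarrow> real"
  assumes "0 < \<mu>" and "\<mu> \<le> L" and "0 \<le> c"
    and "u = (\<lambda>t. (1/2) * (L^2 + \<mu>^2 + 2 * c^2) * t^2 - (L + \<mu>) * t
               + (1/2) * (L - \<mu>) * t * sqrt ((L * t + \<mu> * t - 2)^2 + 4 * c^2 * t^2))"
  shows "convex_on {0<..<2 * \<mu> / (\<mu> * L + c^2)} u
         \<and> u ` {0<..<2 * \<mu> / (\<mu> * L + c^2)} \<subseteq> {-1..<0}"
proof -
  define m1 where "m1 \<tau> = \<tau>^2*(\<mu>^2+c^2) - 2*\<tau>*\<mu>" for \<tau> :: real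
  define m2 where "m2 \<tau> = \<tau>^2*(c^2+L^2) - 2*\<tau>*L" for \<tau> :: real
  define e where "e \<tau> = \<tau>^2*c*(\<mu>-L)" for \<tau> :: real
  define s where "s \<tau> = (m1 \<tau> + m2 \<tau>)/2" for \<tau>
  define d where "d \<tau> = (m1 \<tau> - m2 \<tau>)/2" for \<tau>
  define \<phi> where "\<phi> a b \<tau> = s \<tau> + a * d \<tau> + b * e \<tau>" for a b \<tau>
  have F1: "u \<tau> = s \<tau> + sqrt (d \<tau>^2 + e \<tau>^2)" if "\<tau> \<ge> 0" for \<tau>
  proof -
    have "d \<tau>^2 + e \<tau>^2 = ((L-\<mu>)*\<tau>/2)^2 * ((L * \<tau> + \<mu> * \<tau> - 2)^2 + 4 * c^2 * \<tau>^2)"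
      unfolding d_def e_def m1_def m2_def by (simp add: power2_eq_square field_simps)
    then have hs: "sqrt (d \<tau>^2 + e \<tau>^2) = ((L-\<mu>)*\<tau>/2) * sqrt ((L * \<tau> + \<mu> * \<tau> - 2)^2 + 4 * c^2 * \<tau>^2)"
      using that assms by (simp add: real_sqrt_mult)
    show ?thesis unfolding assms(4) s_def hs unfolding m1_def m2_def
      by (simp add: field_simps)
  qed
  have F2: "\<phi> a b \<tau> \<le> u \<tau>" if "a^2+b^2 = 1" "\<tau> \<ge> 0" for a b \<tau>
    using F1[OF that(2)] cs_bound[OF that(1), of "d \<tau>" "e \<tau>"] unfolding \<phi>_def
    by (simp add: mult.commute)
  have F3: "\<exists>a b. a^2+b^2 = 1 \<and> \<phi> a b \<tau> = u \<tau>" if "\<tau> \<ge> 0" for \<tau>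
  proof (cases "d \<tau>^2 + e \<tau>^2 = 0")
    case True
    then have "d \<tau> = 0" "e \<tau> = 0" by (smt (verit) zero_le_power2 zero_eq_power2)+
    then show ?thesis using F1[OF that] True by (intro exI[of _ 1] exI[of _ 0]) (simp add: \<phi>_def)
  next
    case False
    define R where "R = sqrt (d \<tau>^2 + e \<tau>^2)"
    have Rp: "R > 0" using False unfolding R_def
      by (smt (verit) real_sqrt_gt_0_iff zero_le_power2)
    have R2: "R^2 = d \<tau>^2 + e \<tau>^2" unfolding R_def by simp
    show ?thesis
    proof (rule exI[of _ "d \<tau>/R"], rule exI[of _ "e \<tau>/R"], rule conjI)
      have "(d \<tau>/R)^2 + (e \<tau>/R)^2 = (d \<tau>^2 + e \<tau>^2)/R^2" by (simp add: power_divide add_divide_distrib)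
      also have "\<dots> = 1" unfolding R2[symmetric] using Rp by simp
      finally show "(d \<tau>/R)^2 + (e \<tau>/R)^2 = 1" .
      have "d \<tau>/R * d \<tau> + e \<tau>/R * e \<tau> = R^2/R" using R2 by (simp add: power2_eq_square add_divide_distrib)
      also have "\<dots> = R" using Rp by (simp add: power2_eq_square)
      finally show "\<phi> (d \<tau> / R) (e \<tau> / R) \<tau> = u \<tau>" using F1[OF that] unfolding \<phi>_def R_def by simp
    qed
  qed
  have F4: "\<phi> a b ((1-t)*x+t*y) \<le> (1-t)*\<phi> a b x + t*\<phi> a b y"
    if "a^2+b^2 = 1" "0 \<le> t" "t \<le> 1" for a b t x y
  proof -
    define A where "A = (L^2+\<mu>^2+2*c^2)/2 + a*(\<mu>^2-L^2)/2 + b*(c*(\<mu>-L))"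
    define B where "B = -(L+\<mu>) + a*(L-\<mu>)"
    have phi: "\<phi> a b \<tau> = A*\<tau>^2 + B*\<tau>" for \<tau>
      unfolding \<phi>_def A_def B_def s_def d_def e_def m1_def m2_def
      by (simp add: power2_eq_square field_simps)
    have "-(a*(\<mu>^2-L^2)/2 + b*(c*(\<mu>-L))) \<le> sqrt (((\<mu>^2-L^2)/2)^2 + (c*(\<mu>-L))^2)"
      using cs_bound[OF that(1), of "-((\<mu>^2-L^2)/2)" "-(c*(\<mu>-L))"] by (simp add: mult.commute)
    also have "\<dots> \<le> (L^2+\<mu>^2)/2 + c^2"
    proof (rule real_le_lsqrt)
      show "0 \<le> (L^2+\<mu>^2)/2 + c^2" by simp
      have "((L^2+\<mu>^2)/2 + c^2)^2 - (((\<mu>^2-L^2)/2)^2 + (c*(\<mu>-L))^2)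
            = L^2*\<mu>^2 + 2*c^2*\<mu>*L + c^2*c^2"
        by (simp add: power2_eq_square field_simps)
      moreover have "L^2*\<mu>^2 + 2*c^2*\<mu>*L + c^2*c^2 \<ge> 0" using assms by simp
      ultimately show "((\<mu>^2-L^2)/2)^2 + (c*(\<mu>-L))^2 \<le> ((L^2+\<mu>^2)/2 + c^2)^2" by linarith
    qed
    finally have "A \<ge> 0" unfolding A_def by (simp add: field_simps)
    show ?thesis unfolding phi using quad_convex[OF \<open>A \<ge> 0\<close> that(2,3)] by simp
  qed
  define S where "S = {0<..<2 * \<mu> / (\<mu> * L + c^2)}"
  have conv: "convex_on S u"
  proof (rule convex_onI)
    show "convex S" unfolding S_def by simp
    fix t x y :: real
    assume t: "0 < t" "t < 1" and xy: "x \<in> S" "y \<in> S"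
    have x0: "x \<ge> 0" "y \<ge> 0" using xy unfolding S_def by auto
    have z0: "(1-t)*x + t*y \<ge> 0" using x0 t by simp
    obtain a b where ab: "a^2+b^2 = 1" "\<phi> a b ((1-t)*x+t*y) = u ((1-t)*x+t*y)"
      using F3[OF z0] by blast
    have "u ((1-t)*x+t*y) \<le> (1-t)*\<phi> a b x + t*\<phi> a b y"
      using F4[OF ab(1), of t x y] t ab(2) by simp
    also have "\<dots> \<le> (1-t)*u x + t*u y"
      using F2[OF ab(1) x0(1)] F2[OF ab(1) x0(2)] t
      by (intro add_mono mult_left_mono) auto
    finally show "u ((1 - t) *\<^sub>R x + t *\<^sub>R y) \<le> (1 - t) * u x + t * u y" by simp
  qed
  have range: "u \<tau> \<in> {-1..<0}" if "\<tau> \<in> S" for \<tau>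
  proof -
    define k where "k = \<mu>*L + c^2"
    have kp: "k > 0" unfolding k_def using assms by (smt (verit) mult_pos_pos zero_le_power2)
    have t0: "\<tau> > 0" and tk: "k*\<tau> < 2*\<mu>" using that kp unfolding S_def k_def[symmetric]
      by (auto simp: field_simps)
    have lo: "u \<tau> \<ge> -1"
    proof -
      have "\<phi> 1 0 \<tau> \<le> u \<tau>" using F2[of 1 0 \<tau>] t0 by simp
      moreover have "\<phi> 1 0 \<tau> = m1 \<tau>" unfolding \<phi>_def s_def d_def by (simp add: field_simps)
      moreover have "m1 \<tau> + 1 = (\<tau>*\<mu> - 1)^2 + (\<tau>*c)^2" unfolding m1_def
        by (simp add: power2_eq_square algebra_simps)
      ultimately show ?thesis using zero_le_power2[of "\<tau>*\<mu> - 1"] zero_le_power2[of "\<tau>*c"] by linarith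
    qed
    have hi: "u \<tau> < 0"
    proof -
      have "\<mu>*\<mu> \<le> \<mu>*L" using assms by simp
      then have "(\<mu>^2+c^2)*\<tau> \<le> k*\<tau>" unfolding k_def using t0 by (simp add: power2_eq_square)
      then have lt: "(\<mu>^2+c^2)*\<tau> - 2*\<mu> < 0" using tk by linarith
      have "m1 \<tau> = \<tau>*((\<mu>^2+c^2)*\<tau> - 2*\<mu>)" unfolding m1_def by (simp add: power2_eq_square algebra_simps)
      then have m1n: "m1 \<tau> < 0" using t0 lt by (simp add: mult_pos_neg)
      have det: "m1 \<tau> * m2 \<tau> - e \<tau>^2 = \<tau>^2 * ((k*\<tau> - 2*\<mu>)*(k*\<tau> - 2*L))"
        unfolding m1_def m2_def e_def k_def by (simp add: power2_eq_square algebra_simps)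
      have "(k*\<tau> - 2*\<mu>)*(k*\<tau> - 2*L) > 0" using tk assms by (intro mult_neg_neg) auto
      then have detp: "m1 \<tau> * m2 \<tau> - e \<tau>^2 > 0" using det t0 by simp
      then have "m1 \<tau> * m2 \<tau> > 0" using zero_le_power2[of "e \<tau>"] by linarith
      then have m2n: "m2 \<tau> < 0" using m1n by (auto simp: zero_less_mult_iff)
      have sn: "s \<tau> < 0" unfolding s_def using m1n m2n by simp
      have "s \<tau>^2 - d \<tau>^2 = m1 \<tau> * m2 \<tau>" unfolding s_def d_def
        by (simp add: power2_eq_square field_simps)
      then have "d \<tau>^2 + e \<tau>^2 < (s \<tau>)^2" using detp by linarith
      then have "sqrt (d \<tau>^2 + e \<tau>^2) < sqrt ((s \<tau>)^2)" by (rule real_sqrt_less_mono)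
      also have "\<dots> = - s \<tau>" using sn by simp
      finally have hs: "sqrt (d \<tau>^2 + e \<tau>^2) < - s \<tau>" .
      then show ?thesis using F1 t0 by simp
    qed
    show ?thesis using lo hi by simp
  qed
  show ?thesis using conv range unfolding S_def by auto
qed

end
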